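(* Let $2\le j<k$ be integers and $g_k(x,y)=(1+x+y)^k-ky-\bigl((1+x)^k-1\bigr)$. For $n$ a multiple of $k$ and integers $a,b\ge 0$ with $a+b\le n$, define $$E_{n,j,k}\!\left(\tfrac an,\tfrac bn\right)=\frac{\binom{n}{a,\,b,\,n-a-b}\,S_{n,j,k}(a,b)}{\binom{nj}{ja,\,jb,\,j(n-a-b)}},\qquad S_{n,j,k}(a,b)=\operatorname{coeff}\!\left(g_k(x,y)^{nj/k},\,x^{ja}y^{jb}\right).$$ Let $\alpha,\beta>0$ with $\alpha+\beta<1$, and let $(n,a_n,b_n)$ range over sequences with $n\to\infty$ through multiples of $k$ and $a_n/n\to\alpha$, $b_n/n\to\beta$. Then for all $x,y>0$, $$\limsup_{n\to\infty}\frac1n\ln E_{n,j,k}\!\left(\tfrac{a_n}{n},\tfrac{b_n}{n}\right)\le \frac{j}{k}\ln\frac{1+(1+x+y)^k-ky-(1+x)^k}{x^{k\alpha}y^{k\beta}}+(1-j)\,h(\alpha,\beta,1-\alpha-\beta),$$ where $h(p,q,r)=-p\ln p-q\ln q-r\ln r$.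
   Context: $E_{n,j,k}(a/n,b/n)$ is the average number of LM1 stopping sets in a random $(j,k)$-regular LDPC code of length $n$ with $a$ correct (unverified, correctly received) and $b$ incorrect variable nodes, the rest being verified; $g_k(x,y)$ enumerates the edge patterns at a single degree-$k$ check node that prevent LM1 decoding progress ($1$ marks a verified edge, $x$ a correct edge, $y$ an incorrect edge). $\operatorname{coeff}(f,x^py^q)$ denotes the coefficient of $x^py^q$ in the polynomial $f$. *)

theory Defs
  imports "HOL-Analysis.Analysis" "HOL-Computational_Algebra.Polynomial" "HOL-Library.Liminf_Limsup"
begin

text \<open>Bivariate integer polynomials are represented as int poly poly:
  the outer variable is y, the inner variable (coefficients) is x.
  The coefficient of x^p y^q in P is coeff (coeff P q) p.\<close>

definition varX :: "int poly poly" where "varX = [: [:0, 1:] :]"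
definition varY :: "int poly poly" where "varY = [: 0, 1 :]"

definition bicoeff :: "int poly poly \<Rightarrow> nat \<Rightarrow> nat \<Rightarrow> int" where
  "bicoeff P p q = coeff (coeff P q) p"

definition g_poly :: "nat \<Rightarrow> int poly poly" where
  "g_poly k = (1 + varX + varY) ^ k - of_nat k * varY - ((1 + varX) ^ k - 1)"

definition S_njk :: "nat \<Rightarrow> nat \<Rightarrow> nat \<Rightarrow> nat \<Rightarrow> nat \<Rightarrow> int" where
  "S_njk n j k a b = bicoeff (g_poly k ^ (n * j div k)) (j * a) (j * b)"

definition multinom3 :: "nat \<Rightarrow> nat \<Rightarrow> nat \<Rightarrow> real" where
  "multinom3 n a b = fact n / (fact a * fact b * fact (n - a - b))"

definition E_njk :: "nat \<Rightarrow> nat \<Rightarrow> nat \<Rightarrow> nat \<Rightarrow> nat \<Rightarrow> real" where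
  "E_njk n j k a b = multinom3 n a b * real_of_int (S_njk n j k a b)
       / multinom3 (n * j) (j * a) (j * b)"

definition log_rate :: "nat \<Rightarrow> real \<Rightarrow> ereal" where
  "log_rate n e = (if e = 0 then -\<infinity> else ereal (ln e / real n))"

definition entropy3 :: "real \<Rightarrow> real \<Rightarrow> real \<Rightarrow> real" where
  "entropy3 p q r = - p * ln p - q * ln q - r * ln r"

end

theory Submission imports Defs "HOL-Real_Asymp.Real_Asymp" begin

lemma sum_hom_gen:
  assumes "f 0 = 0" "\<And>a b. f (a+b) = f a + f b"
  shows "f (sum g A) = (\<Sum>x\<in>A. f (g x))"
  by (induct A rule: infinite_finite_induct) (simp_all add: assms)

lemma map_poly_add_hom:
  fixes f :: "'a::comm_semiring_1 \<Rightarrow> 'b::comm_semiring_1"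
  assumes "f 0 = 0" "\<And>a b. f (a+b) = f a + f b"
  shows "map_poly f (p+q) = map_poly f p + map_poly f q"
  by (rule poly_eqI) (simp add: coeff_map_poly assms)

lemma map_poly_mult_hom:
  fixes f :: "'a::comm_semiring_1 \<Rightarrow> 'b::comm_semiring_1"
  assumes "f 0 = 0" "\<And>a b. f (a+b) = f a + f b" "\<And>a b. f (a*b) = f a * f b"
  shows "map_poly f (p*q) = map_poly f p * map_poly f q"
  by (rule poly_eqI) (simp add: coeff_map_poly coeff_mult assms sum_hom_gen[of f, OF assms(1,2)])

lemma map_poly_power_hom:
  fixes f :: "'a::comm_semiring_1 \<Rightarrow> 'b::comm_semiring_1"
  assumes "f 0 = 0" "\<And>a b. f (a+b) = f a + f b" "\<And>a b. f (a*b) = f a * f b" "f 1 = 1"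
  shows "map_poly f (p^n) = map_poly f p ^ n"
  by (induct n) (simp_all add: map_poly_mult_hom[OF assms(1-3)] assms(4))

definition hin :: "real \<Rightarrow> int poly \<Rightarrow> real" where
  "hin x c = poly (map_poly real_of_int c) x"

lemma hin_0[simp]: "hin x 0 = 0" and hin_1[simp]: "hin x 1 = 1"
  by (simp_all add: hin_def)
lemma hin_add[simp]: "hin x (c+d) = hin x c + hin x d"
  by (simp add: hin_def map_poly_add_hom)
lemma hin_mult[simp]: "hin x (c*d) = hin x c * hin x d"
  by (simp add: hin_def map_poly_mult_hom)

definition ev :: "real \<Rightarrow> real \<Rightarrow> int poly poly \<Rightarrow> real" where
  "ev x y P = poly (map_poly (hin x) P) y"

lemma ev_add[simp]: "ev x y (P+Q) = ev x y P + ev x y Q"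
  by (simp add: ev_def map_poly_add_hom)
lemma ev_mult[simp]: "ev x y (P*Q) = ev x y P * ev x y Q"
  by (simp add: ev_def map_poly_mult_hom)
lemma ev_power[simp]: "ev x y (P^n) = ev x y P ^ n"
  by (simp add: ev_def map_poly_power_hom)
lemma ev_1[simp]: "ev x y 1 = 1"
  by (simp add: ev_def)
lemma ev_0[simp]: "ev x y 0 = 0"
  by (simp add: ev_def)
lemma ev_diff[simp]: "ev x y (P-Q) = ev x y P - ev x y Q"
proof -
  have "ev x y P = ev x y (P - Q + Q)" by simp
  also have "\<dots> = ev x y (P-Q) + ev x y Q" by (rule ev_add)
  finally show ?thesis by simp
qed
lemma ev_of_nat[simp]: "ev x y (of_nat n) = real n"
  by (induct n) (simp_all add: algebra_simps)
lemma ev_X[simp]: "ev x y varX = x"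
  by (simp add: ev_def varX_def hin_def map_poly_pCons)
lemma ev_Y[simp]: "ev x y varY = y"
  by (simp add: ev_def varY_def hin_def map_poly_pCons)

lemma ev_g: "ev x y (g_poly k) = 1 + (1 + x + y) ^ k - real k * y - (1 + x) ^ k"
  by (simp add: g_poly_def)

definition nn1 :: "int poly \<Rightarrow> bool" where "nn1 c \<longleftrightarrow> (\<forall>i. 0 \<le> coeff c i)"
definition nn2 :: "int poly poly \<Rightarrow> bool" where "nn2 P \<longleftrightarrow> (\<forall>q. nn1 (coeff P q))"

lemma nn1_add: "nn1 c \<Longrightarrow> nn1 d \<Longrightarrow> nn1 (c+d)"
  by (simp add: nn1_def)
lemma nn1_mult: "nn1 c \<Longrightarrow> nn1 d \<Longrightarrow> nn1 (c*d)"
  by (simp add: nn1_def coeff_mult sum_nonneg)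
lemma nn1_sum: "(\<And>i. i \<in> A \<Longrightarrow> nn1 (f i)) \<Longrightarrow> nn1 (sum f A)"
  by (simp add: nn1_def coeff_sum sum_nonneg)
lemma nn2_add: "nn2 c \<Longrightarrow> nn2 d \<Longrightarrow> nn2 (c+d)"
  by (simp add: nn2_def nn1_add)
lemma nn2_mult: "nn2 c \<Longrightarrow> nn2 d \<Longrightarrow> nn2 (c*d)"
  unfolding nn2_def coeff_mult by (intro allI nn1_sum nn1_mult) auto
lemma nn2_sum: "(\<And>i. i \<in> A \<Longrightarrow> nn2 (f i)) \<Longrightarrow> nn2 (sum f A)"
  unfolding nn2_def coeff_sum by (intro allI nn1_sum) auto
lemma nn2_1: "nn2 1"
  by (auto simp add: nn2_def nn1_def coeff_1)
lemma nn2_power: "nn2 c \<Longrightarrow> nn2 (c^n)"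
  by (induct n) (simp_all add: nn2_1 nn2_mult)
lemma nn2_of_nat: "nn2 (of_nat n)"
  by (induct n) (simp_all add: nn2_add nn2_1 nn2_def nn1_def)
lemma nn2_X: "nn2 varX"
  by (auto simp add: nn2_def nn1_def varX_def coeff_pCons split: nat.splits)
lemma nn2_Y: "nn2 varY"
  by (auto simp add: nn2_def nn1_def varY_def coeff_pCons split: nat.splits)

lemma poly_nonneg_term:
  fixes r :: "real poly"
  assumes "\<And>i. 0 \<le> coeff r i" "0 \<le> y"
  shows "coeff r q * y^q \<le> poly r y" "0 \<le> poly r y"
proof -
  show "0 \<le> poly r y" unfolding poly_altdef by (intro sum_nonneg) (simp add: assms)
  show "coeff r q * y^q \<le> poly r y"
  proof (cases "q \<le> degree r")
    case True
    then show ?thesis unfolding poly_altdef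
      by (intro member_le_sum[where f="\<lambda>i. coeff r i * y ^ i"]) (auto simp: assms)
  next
    case False
    then have "coeff r q = 0" by (simp add: coeff_eq_0)
    then show ?thesis using \<open>0 \<le> poly r y\<close> by simp
  qed
qed

lemma hin_bound:
  assumes "nn1 c" "0 \<le> x"
  shows "real_of_int (coeff c p) * x^p \<le> hin x c" "0 \<le> hin x c"
  using poly_nonneg_term(1)[where r="map_poly real_of_int c" and y=x and q=p] poly_nonneg_term(2)[where r="map_poly real_of_int c" and y=x] assms
  by (auto simp: hin_def nn1_def coeff_map_poly)

lemma bicoeff_bound:
  assumes "nn2 P" "0 \<le> x" "0 \<le> y"
  shows "real_of_int (bicoeff P p q) * x^p * y^q \<le> ev x y P" "0 \<le> ev x y P"
proof -
  have c: "\<And>i. 0 \<le> coeff (map_poly (hin x) P) i"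
    using hin_bound(2) assms by (simp add: coeff_map_poly nn2_def)
  have "real_of_int (bicoeff P p q) * x^p * y^q \<le> hin x (coeff P q) * y^q"
    using hin_bound(1)[of "coeff P q" x p] assms
    by (intro mult_right_mono) (auto simp: bicoeff_def nn2_def)
  also have "\<dots> \<le> ev x y P"
    using poly_nonneg_term(1)[OF c assms(3), of q] by (simp add: ev_def coeff_map_poly)
  finally show "real_of_int (bicoeff P p q) * x^p * y^q \<le> ev x y P" .
  show "0 \<le> ev x y P" using poly_nonneg_term(2)[OF c assms(3)] by (simp add: ev_def)
qed

lemma bicoeff_nonneg: "nn2 P \<Longrightarrow> 0 \<le> bicoeff P p q"
  by (simp add: nn2_def nn1_def bicoeff_def)

lemma nn2_g_decomp:
  assumes "2 \<le> k"
  shows "\<exists>Q. nn2 Q \<and> g_poly k = 1 + Q"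
proof -
  obtain m where k: "k = Suc (Suc m)" using assms by (metis add_2_eq_Suc le_Suc_ex)
  define X where "X = varX"
  define Y where "Y = varY"
  define R where "R = (\<Sum>i\<le>m. of_nat (k choose Suc (Suc i)) * Y^Suc (Suc i) * (X+1)^(k - Suc (Suc i)))"
  define T where "T = (\<Sum>i\<le>m. of_nat (Suc m choose Suc i) * X^Suc i * (1::int poly poly)^(Suc m - Suc i))"
  have "(1+X+Y)^k = (Y + (X+1))^k" by (simp add: algebra_simps)
  also have "\<dots> = (\<Sum>i\<le>k. of_nat (k choose i) * Y^i * (X+1)^(k-i))" by (rule binomial_ring)
  also have "\<dots> = of_nat (k choose 0) * Y^0 * (X+1)^(k-0) + (of_nat (k choose Suc 0) * Y^Suc 0 * (X+1)^(k-Suc 0) + R)"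
    unfolding R_def k by (simp only: sum.atMost_Suc_shift)
  also have "\<dots> = (X+1)^k + of_nat k * Y * (X+1)^(Suc m) + R"
    using k by simp
  finally have e1: "(1+X+Y)^k = (X+1)^k + of_nat k * Y * (X+1)^(Suc m) + R" .
  have "(X+1)^(Suc m) = (\<Sum>i\<le>Suc m. of_nat (Suc m choose i) * X^i * 1^(Suc m-i))" by (rule binomial_ring)
  also have "\<dots> = 1 + T" unfolding T_def by (simp only: sum.atMost_Suc_shift) simp
  finally have e2: "(X+1)^(Suc m) = 1 + T" .
  have g: "g_poly k = 1 + of_nat k * Y * T + R"
    unfolding g_poly_def X_def[symmetric] Y_def[symmetric] e1[unfolded add.commute[of X 1]]
    using e2 by (simp add: algebra_simps add.commute[of X 1])
  have nX: "nn2 X" and nY: "nn2 Y" using nn2_X nn2_Y by (simp_all add: X_def Y_def)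
  have "nn2 T" unfolding T_def
    by (intro nn2_sum nn2_mult nn2_of_nat nn2_power nX nn2_1)
  moreover have "nn2 R" unfolding R_def
    by (intro nn2_sum nn2_mult nn2_of_nat nn2_power nX nY nn2_add nn2_1)
  ultimately have "nn2 (of_nat k * Y * T + R)"
    by (intro nn2_add nn2_mult nn2_of_nat nY nn2_1)
  then show ?thesis unfolding g by (auto simp: add.assoc)
qed

lemma nn2_g: "2 \<le> k \<Longrightarrow> nn2 (g_poly k)"
  using nn2_g_decomp nn2_add nn2_1 by metis

lemma G_ge1:
  assumes "2 \<le> k" "0 \<le> x" "0 \<le> y"
  shows "1 \<le> 1 + (1 + x + y) ^ k - real k * y - (1 + x) ^ k"
proof -
  obtain Q where "nn2 Q" "g_poly k = 1 + Q" using nn2_g_decomp[OF assms(1)] by blast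
  then have "ev x y (g_poly k) = 1 + ev x y Q" by simp
  moreover have "0 \<le> ev x y Q" using bicoeff_bound(2)[OF \<open>nn2 Q\<close> assms(2,3)] .
  ultimately show ?thesis using ev_g[of x y k] by simp
qed

lemma ln_fact_lower: "real m * ln (real m) - real m \<le> ln (fact m)"
proof (induct m)
  case 0
  then show ?case by simp
next
  case (Suc m)
  have key: "real m * ln (real m + 1) - real m * ln (real m) \<le> 1"
  proof (cases "m = 0")
    case False
    then have mp: "real m > 0" by simp
    have "ln ((real m + 1) / real m) \<le> (real m + 1) / real m - 1"
      using mp by (intro ln_le_minus_one) simp
    also have "\<dots> = 1 / real m" using mp by (simp add: field_simps)
    finally have "ln (real m + 1) - ln (real m) \<le> 1 / real m"
      using mp by (simp add: ln_div)
    then have "real m * (ln (real m + 1) - ln (real m)) \<le> real m * (1 / real m)"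
      using mp by (intro mult_left_mono) auto
    then show ?thesis using mp by (simp add: algebra_simps)
  qed simp
  have "ln (fact (Suc m) :: real) = ln (real m + 1) + ln (fact m)"
    by (simp add: ln_mult add.commute)
  then show ?case using Suc key by (simp add: algebra_simps)
qed

lemma ln_fact_upper1:
  assumes "1 \<le> m"
  shows "ln (fact m) \<le> (real m + 1) * ln (real m) - real m + 1"
  using assms
proof (induct m rule: dec_induct)
  case base
  then show ?case by simp
next
  case (step m)
  then have mp: "real m > 0" by simp
  have "ln (real m / (real m + 1)) \<le> real m / (real m + 1) - 1"
    using mp by (intro ln_le_minus_one) simp
  also have "\<dots> = - 1 / (real m + 1)" using mp by (simp add: field_simps)
  finally have "ln (real m) - ln (real m + 1) \<le> - 1 / (real m + 1)"
    using mp by (simp add: ln_div)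
  then have "(real m + 1) * (ln (real m) - ln (real m + 1)) \<le> (real m + 1) * (- 1 / (real m + 1))"
    using mp by (intro mult_left_mono) auto
  then have key: "(real m + 1) * ln (real m) + 1 \<le> (real m + 1) * ln (real m + 1)"
    using mp by (simp add: algebra_simps)
  have "ln (fact (Suc m) :: real) = ln (real m + 1) + ln (fact m)"
    by (simp add: ln_mult add.commute)
  then show ?case using step key by (simp add: algebra_simps)
qed

lemma ln_fact_upper: "ln (fact m) \<le> real m * ln (real m) - real m + 1 + ln (real m + 1)"
proof (cases "m = 0")
  case False
  then have mp: "real m > 0" by simp
  have "ln (real m) \<le> ln (real m + 1)" using mp by simp
  moreover have "(real m + 1) * ln (real m) = real m * ln (real m) + ln (real m)" by (simp add: algebra_simps)
  ultimately show ?thesis using ln_fact_upper1[of m] False by linarith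
qed simp

lemma ent_term: "0 \<le> t \<Longrightarrow> 0 < N \<Longrightarrow> N * ((t / N) * ln (t / N)) = t * ln t - t * ln (N::real)"
  by (cases "t = 0") (simp_all add: ln_div algebra_simps)

lemma ent_id:
  fixes A B C N :: real
  assumes "0 < N" "0 \<le> A" "0 \<le> B" "0 \<le> C" "A + B + C = N"
  shows "N * entropy3 (A/N) (B/N) (C/N) = N * ln N - A * ln A - B * ln B - C * ln C"
proof -
  have "N * entropy3 (A/N) (B/N) (C/N) = - (N * ((A / N) * ln (A / N))) - (N * ((B / N) * ln (B / N)))
      - (N * ((C / N) * ln (C / N)))"
    by (simp add: entropy3_def algebra_simps)
  also have "\<dots> = (A + B + C) * ln N - A * ln A - B * ln B - C * ln C"
    using ent_term[of A N] ent_term[of B N] ent_term[of C N] assms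
      distrib_right[of "A+B" C "ln N"] distrib_right[of A B "ln N"] by linarith
  finally show ?thesis using assms(5) by simp
qed

lemma multinom_bounds:
  assumes "0 < N" "A + B \<le> N"
  shows "ln (multinom3 N A B) \<le> real N * entropy3 (real A / real N) (real B / real N) (real (N-A-B) / real N)
            + 1 + ln (real N + 1)"
    "real N * entropy3 (real A / real N) (real B / real N) (real (N-A-B) / real N) - 3 - 3 * ln (real N + 1)
       \<le> ln (multinom3 N A B)"
proof -
  define C where "C = N - A - B"
  have sum: "real A + real B + real C = real N" using assms by (simp add: C_def)
  have e: "real N * entropy3 (real A / real N) (real B / real N) (real C / real N)
     = real N * ln (real N) - real A * ln (real A) - real B * ln (real B) - real C * ln (real C)"
    using assms sum by (intro ent_id) auto
  have l: "ln (multinom3 N A B) = ln (fact N) - ln (fact A) - ln (fact B) - ln (fact C)"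
    by (simp add: multinom3_def C_def ln_div ln_mult)
  have mono: "ln (real t + 1) \<le> ln (real N + 1)" if "t \<le> N" for t
    using that by simp
  have "A \<le> N" "B \<le> N" "C \<le> N" using assms by (auto simp: C_def)
  note m = mono[OF this(1)] mono[OF this(2)] mono[OF this(3)]
  show "ln (multinom3 N A B) \<le> real N * entropy3 (real A / real N) (real B / real N) (real (N-A-B) / real N)
            + 1 + ln (real N + 1)"
    using ln_fact_upper[of N] ln_fact_lower[of A] ln_fact_lower[of B] ln_fact_lower[of C]
    unfolding C_def[symmetric] e l using sum by linarith
  show "real N * entropy3 (real A / real N) (real B / real N) (real (N-A-B) / real N) - 3 - 3 * ln (real N + 1)
       \<le> ln (multinom3 N A B)"
    using ln_fact_lower[of N] ln_fact_upper[of A] ln_fact_upper[of B] ln_fact_upper[of C] m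
    unfolding C_def[symmetric] e l using sum by linarith
qed

lemma core:
  assumes j: "1 \<le> j" and k: "2 \<le> k" and dvd: "k dvd n" and n: "0 < n" and ab: "a + b \<le> n"
    and x: "0 < x" and y: "0 < y" and S: "S_njk n j k a b \<noteq> 0"
  shows "0 < E_njk n j k a b"
    "ln (E_njk n j k a b) \<le> (1 - real j) * real n * entropy3 (real a / real n) (real b / real n) (real (n-a-b) / real n)
        + (real n * real j / real k) * ln (1 + (1 + x + y) ^ k - real k * y - (1 + x) ^ k)
        - real j * real a * ln x - real j * real b * ln y + 4 + 3 * ln (real j) + 4 * ln (real n + 1)"
proof -
  define G where "G = 1 + (1 + x + y) ^ k - real k * y - (1 + x) ^ k"
  define N where "N = n * j div k"
  define P where "P = g_poly k ^ N"
  define h where "h = entropy3 (real a / real n) (real b / real n) (real (n-a-b) / real n)"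
  have G1: "1 \<le> G" unfolding G_def using G_ge1[OF k] x y by simp
  have nP: "nn2 P" unfolding P_def by (intro nn2_power nn2_g k)
  have Sdef: "S_njk n j k a b = bicoeff P (j*a) (j*b)" by (simp add: S_njk_def P_def N_def)
  have S1: "1 \<le> real_of_int (S_njk n j k a b)"
    using bicoeff_nonneg[OF nP, of "j*a" "j*b"] S Sdef by simp
  have bound: "real_of_int (S_njk n j k a b) * x^(j*a) * y^(j*b) \<le> G ^ N"
    using bicoeff_bound(1)[OF nP, of x y "j*a" "j*b"] x y unfolding Sdef P_def
    by (simp add: ev_g G_def)
  obtain t where t: "n = k * t" using dvd by blast
  have Nr: "real N = real n * real j / real k" using k by (simp add: N_def t)
  have lnS: "ln (real_of_int (S_njk n j k a b)) + real (j*a) * ln x + real (j*b) * ln y \<le> real N * ln G"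
  proof -
    have "ln (real_of_int (S_njk n j k a b) * x^(j*a) * y^(j*b)) \<le> ln (G ^ N)"
      using bound S1 x y by (intro ln_mono) auto
    then show ?thesis using S1 x y G1 by (simp add: ln_mult ln_realpow)
  qed
  have M1pos: "0 < multinom3 n a b" "0 < multinom3 (n*j) (j*a) (j*b)"
    by (simp_all add: multinom3_def)
  show Epos: "0 < E_njk n j k a b"
    unfolding E_njk_def using M1pos S1 by simp
  have lnE: "ln (E_njk n j k a b) = ln (multinom3 n a b) + ln (real_of_int (S_njk n j k a b))
      - ln (multinom3 (n*j) (j*a) (j*b))"
    unfolding E_njk_def using M1pos S1 by (simp add: ln_div ln_mult)
  have U: "ln (multinom3 n a b) \<le> real n * h + 1 + ln (real n + 1)"
    using multinom_bounds(1)[OF n ab] by (simp add: h_def)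
  have jn: "0 < n*j" using n j by simp
  have jab: "j*a + j*b \<le> n*j" using ab by (metis add_mult_distrib2 mult.commute mult_le_mono2)
  have fr: "real (j*a) / real (n*j) = real a / real n" "real (j*b) / real (n*j) = real b / real n"
     "real (n*j - j*a - j*b) / real (n*j) = real (n-a-b) / real n"
  proof -
    have e: "n*j - j*a - j*b = j * (n-a-b)" by (simp add: algebra_simps diff_mult_distrib2)
    show "real (j*a) / real (n*j) = real a / real n" "real (j*b) / real (n*j) = real b / real n"
      "real (n*j - j*a - j*b) / real (n*j) = real (n-a-b) / real n"
      using j unfolding e by (simp_all add: field_simps)
  qed
  have L: "real (n*j) * h - 3 - 3 * ln (real (n*j) + 1) \<le> ln (multinom3 (n*j) (j*a) (j*b))"
    using multinom_bounds(2)[OF jn jab] unfolding fr h_def .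
  have lj: "ln (real (n*j) + 1) \<le> ln (real j) + ln (real n + 1)"
  proof -
    have "ln (real (n*j) + 1) \<le> ln (real j * (real n + 1))"
      using j by (intro ln_mono) (auto simp: algebra_simps add_pos_nonneg)
    then show ?thesis using j by (simp add: ln_mult)
  qed
  have eq1: "real (n*j) * h = real j * real n * h" by simp
  show "ln (E_njk n j k a b) \<le> (1 - real j) * real n * entropy3 (real a / real n) (real b / real n) (real (n-a-b) / real n)
        + (real n * real j / real k) * ln (1 + (1 + x + y) ^ k - real k * y - (1 + x) ^ k)
        - real j * real a * ln x - real j * real b * ln y + 4 + 3 * ln (real j) + 4 * ln (real n + 1)"
    unfolding h_def[symmetric] G_def[symmetric] Nr[symmetric]
    using lnE U L lj lnS eq1 by (simp add: algebra_simps)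
qed

theorem theorem6:
  fixes j k :: nat and \<alpha> \<beta> x y :: real
    and nn a b :: "nat \<Rightarrow> nat"
  assumes "2 \<le> j" and "j < k"
    and "\<alpha> > 0" and "\<beta> > 0" and "\<alpha> + \<beta> < 1"
    and "filterlim nn at_top sequentially"
    and "\<And>m. k dvd nn m"
    and "\<And>m. a m + b m \<le> nn m"
    and "(\<lambda>m. real (a m) / real (nn m)) \<longlonglongrightarrow> \<alpha>"
    and "(\<lambda>m. real (b m) / real (nn m)) \<longlonglongrightarrow> \<beta>"
    and "x > 0" and "y > 0"
  shows "limsup (\<lambda>m. log_rate (nn m) (E_njk (nn m) j k (a m) (b m)))
    \<le> ereal (real j / real k *
          ln ((1 + (1 + x + y) ^ k - real k * y - (1 + x) ^ k)
              / (x powr (real k * \<alpha>) * y powr (real k * \<beta>)))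
        + (1 - real j) * entropy3 \<alpha> \<beta> (1 - \<alpha> - \<beta>))"
proof -
  note asm = assms
  define G where "G = 1 + (1 + x + y) ^ k - real k * y - (1 + x) ^ k"
  define h where "h m = entropy3 (real (a m) / real (nn m)) (real (b m) / real (nn m))
      (real (nn m - a m - b m) / real (nn m))" for m
  define R where "R m = (1 - real j) * h m + (real j / real k) * ln G
      - real j * (real (a m) / real (nn m)) * ln x - real j * (real (b m) / real (nn m)) * ln y
      + (4 + 3 * ln (real j)) * (1 / real (nn m)) + 4 * (ln (real (nn m) + 1) / real (nn m))" for m
  define Lr where "Lr = (1 - real j) * entropy3 \<alpha> \<beta> (1 - \<alpha> - \<beta>) + (real j / real k) * ln G
      - real j * \<alpha> * ln x - real j * \<beta> * ln y + (4 + 3 * ln (real j)) * 0 + 4 * 0"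
  have k2: "2 \<le> k" and j1: "1 \<le> j" using asm(1,2) by auto
  have G1: "1 \<le> G" unfolding G_def using G_ge1[OF k2] asm(11,12) by simp
  have evpos: "\<forall>\<^sub>F m in sequentially. 1 \<le> nn m"
    using asm(6) unfolding filterlim_at_top by auto
  have le: "\<forall>\<^sub>F m in sequentially. log_rate (nn m) (E_njk (nn m) j k (a m) (b m)) \<le> ereal (R m)"
    using evpos
  proof eventually_elim
    case (elim m)
    show ?case
    proof (cases "S_njk (nn m) j k (a m) (b m) = 0")
      case True
      then show ?thesis by (simp add: log_rate_def E_njk_def)
    next
      case False
      have np: "0 < nn m" using elim by simp
      note c = core[OF j1 k2 asm(7) np asm(8) asm(11,12) False]
      have eq: "real (nn m) * R m = (1 - real j) * real (nn m) * h m
        + (real (nn m) * real j / real k) * ln G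
        - real j * real (a m) * ln x - real j * real (b m) * ln y + 4 + 3 * ln (real j) + 4 * ln (real (nn m) + 1)"
        unfolding R_def using np k2 by (simp add: field_simps)
      have "ln (E_njk (nn m) j k (a m) (b m)) \<le> real (nn m) * R m"
        unfolding eq h_def G_def using c(2) by simp
      then have "ln (E_njk (nn m) j k (a m) (b m)) / real (nn m) \<le> R m"
        using np by (simp add: pos_divide_le_eq mult.commute)
      then show ?thesis using c(1) by (simp add: log_rate_def)
    qed
  qed
  have lim0: "(\<lambda>m. 1 / real (nn m)) \<longlonglongrightarrow> 0"
    by (rule filterlim_compose[OF _ asm(6)]) real_asymp
  have lim1: "(\<lambda>m. ln (real (nn m) + 1) / real (nn m)) \<longlonglongrightarrow> 0"
    by (rule filterlim_compose[OF _ asm(6)]) real_asymp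
  have hlim: "h \<longlonglongrightarrow> entropy3 \<alpha> \<beta> (1 - \<alpha> - \<beta>)"
  proof -
    have e: "\<forall>\<^sub>F m in sequentially. entropy3 (real (a m) / real (nn m)) (real (b m) / real (nn m))
        (1 - real (a m) / real (nn m) - real (b m) / real (nn m)) = h m"
      using evpos
    proof eventually_elim
      case (elim m)
      then have "real (nn m - a m - b m) / real (nn m) = 1 - real (a m) / real (nn m) - real (b m) / real (nn m)"
        using asm(8)[of m] by (simp add: of_nat_diff field_simps)
      then show ?case by (simp add: h_def)
    qed
    have "(\<lambda>m. entropy3 (real (a m) / real (nn m)) (real (b m) / real (nn m))
        (1 - real (a m) / real (nn m) - real (b m) / real (nn m))) \<longlonglongrightarrow> entropy3 \<alpha> \<beta> (1 - \<alpha> - \<beta>)"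
      unfolding entropy3_def using asm(3,4,5,9,10)
      by (intro tendsto_intros tendsto_ln) auto
    then show ?thesis using e by (rule Lim_transform_eventually)
  qed
  have Rlim: "R \<longlonglongrightarrow> Lr"
    unfolding R_def[abs_def] Lr_def
    by (intro tendsto_intros hlim lim0 lim1 asm(9,10))
  have "limsup (\<lambda>m. log_rate (nn m) (E_njk (nn m) j k (a m) (b m))) \<le> limsup (\<lambda>m. ereal (R m))"
    using le by (rule Limsup_mono)
  also have "limsup (\<lambda>m. ereal (R m)) = ereal Lr"
    using Rlim by (intro lim_imp_Limsup) (auto simp: lim_ereal)
  also have "Lr = real j / real k *
          ln ((1 + (1 + x + y) ^ k - real k * y - (1 + x) ^ k)
              / (x powr (real k * \<alpha>) * y powr (real k * \<beta>)))
        + (1 - real j) * entropy3 \<alpha> \<beta> (1 - \<alpha> - \<beta>)"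
  proof -
    have lnq: "ln (G / (x powr (real k * \<alpha>) * y powr (real k * \<beta>)))
        = ln G - real k * \<alpha> * ln x - real k * \<beta> * ln y"
      using G1 asm(11,12) by (simp add: ln_div ln_mult ln_powr)
    show ?thesis unfolding G_def[symmetric] Lr_def lnq using k2
      by (simp add: field_simps)
  qed
  finally show ?thesis .
qed

end
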